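(* Let $\|\cdot\|$ be a norm on $\mathbb{R}^K$. For every $\mathbf{w} = (\mathbf{w}_1,\mathbf{w}_2) \in \mathbb{R}^K\times\mathbb{R}^K$, \[ \min_{\boldsymbol{\alpha}\in\Delta(K)}\max_{\mathbf{l}\in[0,1]^K} \langle \mathbf{w}, (\boldsymbol{\alpha}\odot\mathbf{l},\mathbf{l})\rangle \le h_S(\mathbf{w}). \] That is, the Blackwell condition holds for the game with payoff $r(\boldsymbol{\alpha},\mathbf{l}) = (\boldsymbol{\alpha}\odot\mathbf{l},\mathbf{l})$ and target set $S$.
   Context: $\Delta(K) = \{\boldsymbol{\alpha}\in[0,1]^K : \sum_i\alpha_i = 1\}$; $\boldsymbol{\alpha}\odot\mathbf{l} = (\alpha_1 l_1,\dots,\alpha_K l_K)$; $C^*(\mathbf{l}) = \min_{\boldsymbol{\alpha}\in\Delta(K)}\|\boldsymbol{\alpha}\odot\mathbf{l}\|$; $S = \{(\mathbf{x},\mathbf{y})\in[0,1]^K\times[0,1]^K : \|\mathbf{x}\|\le C^*(\mathbf{y})\}$; $h_S(\mathbf{w}) = \sup_{\mathbf{s}\in S}\langle\mathbf{s},\mathbf{w}\rangle$ with inner product $\langle(\mathbf{a},\mathbf{b}),(\mathbf{c},\mathbf{d})\rangle = \langle\mathbf{a},\mathbf{c}\rangle+\langle\mathbf{b},\mathbf{d}\rangle$ on $\mathbb{R}^K\times\mathbb{R}^K$. *)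

theory Defs
  imports "HOL-Analysis.Analysis"
begin

definition is_norm :: "(real ^ 'k \<Rightarrow> real) \<Rightarrow> bool" where
  "is_norm N \<longleftrightarrow>
     (\<forall>x. 0 \<le> N x) \<and> (\<forall>x. N x = 0 \<longleftrightarrow> x = 0) \<and>
     (\<forall>c x. N (c *\<^sub>R x) = \<bar>c\<bar> * N x) \<and>
     (\<forall>x y. N (x + y) \<le> N x + N y)"

definition cubeK :: "(real ^ 'k) set" where
  "cubeK = {l. \<forall>i. 0 \<le> l $ i \<and> l $ i \<le> 1}"

definition simplexK :: "(real ^ 'k) set" where
  "simplexK = {a. (\<forall>i. 0 \<le> a $ i \<and> a $ i \<le> 1) \<and> (\<Sum>i\<in>UNIV. a $ i) = 1}"

definition hprod :: "real ^ 'k \<Rightarrow> real ^ 'k \<Rightarrow> real ^ 'k" where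
  "hprod a l = (\<chi> i. a $ i * l $ i)"

text \<open>C*(l) = min over the simplexK of N(alpha . l) (the minimum is attained).\<close>
definition Cstar :: "(real ^ 'k \<Rightarrow> real) \<Rightarrow> real ^ 'k \<Rightarrow> real" where
  "Cstar N l = (INF a\<in>simplexK. N (hprod a l))"

definition targetS :: "(real ^ 'k \<Rightarrow> real) \<Rightarrow> ((real ^ 'k) \<times> (real ^ 'k)) set" where
  "targetS N = {(x :: real ^ 'k, y :: real ^ 'k). x \<in> cubeK \<and> y \<in> cubeK \<and> N x \<le> Cstar N y}"

definition pinner :: "(real ^ 'k) \<times> (real ^ 'k) \<Rightarrow> (real ^ 'k) \<times> (real ^ 'k) \<Rightarrow> real" where
  "pinner s w = inner (fst s) (fst w) + inner (snd s) (snd w)"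

definition hS :: "(real ^ 'k \<Rightarrow> real) \<Rightarrow> (real ^ 'k) \<times> (real ^ 'k) \<Rightarrow> real" where
  "hS N w = (SUP s\<in>targetS N. pinner s w)"

end

theory Submission
  imports Defs
begin
lemma cube_eq: "(cubeK :: (real^'k) set) = cbox 0 1"
  by (auto simp: cubeK_def mem_box_cart)
lemma simplex_closed: "closed (simplexK :: (real^'k) set)"
proof -
  have "simplexK = (cubeK :: (real^'k) set) \<inter> {a. (\<Sum>i\<in>UNIV. a $ i) = 1}"
    by (auto simp: simplexK_def cubeK_def)
  moreover have "closed {a::real^'k. (\<Sum>i\<in>UNIV. a $ i) = 1}"
    by (intro closed_Collect_eq continuous_intros)
  ultimately show ?thesis by (metis closed_Int closed_cbox cube_eq)
qed
lemma simplex_compact: "compact (simplexK :: (real^'k) set)"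
proof -
  have "simplexK \<subseteq> (cubeK :: (real^'k) set)" by (auto simp: simplexK_def cubeK_def)
  then show ?thesis using simplex_closed cube_eq
    by (metis compact_cbox compact_Int_closed inf.absorb_iff2)
qed
lemma simplex_ne: "(\<chi> i. 1 / real CARD('k)) \<in> (simplexK :: (real^'k) set)"
  by (auto simp: simplexK_def)
lemma norm_cont:
  assumes "is_norm N" shows "continuous_on UNIV N"
proof (rule convex_on_continuous)
  show "convex_on UNIV N"
  proof (rule convex_onI)
    fix t :: real and x y assume t: "0 < t" "t < 1"
    have "N ((1 - t) *\<^sub>R x + t *\<^sub>R y) \<le> N ((1 - t) *\<^sub>R x) + N (t *\<^sub>R y)"
      using assms unfolding is_norm_def by blast
    also have "\<dots> = (1 - t) * N x + t * N y" using assms t by (simp add: is_norm_def)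
    finally show "N ((1 - t) *\<^sub>R x + t *\<^sub>R y) \<le> (1 - t) * N x + t * N y" .
  qed auto
qed auto
lemma hprod_cube: "a \<in> simplexK \<Longrightarrow> l \<in> cubeK \<Longrightarrow> hprod a l \<in> cubeK"
  by (auto simp: simplexK_def cubeK_def hprod_def mult_le_one)
lemma attain:
  fixes l :: "real^'k"
  assumes N: "is_norm N" and l: "l \<in> cubeK"
  shows "\<exists>a\<in>simplexK. (hprod a l, l) \<in> targetS N"
proof -
  have "continuous_on simplexK (\<lambda>a. N (hprod a l))"
    unfolding hprod_def
    by (rule continuous_on_compose2[OF norm_cont[OF N]]) (auto intro!: continuous_intros)
  then obtain a where a: "a \<in> simplexK" "\<forall>b\<in>simplexK. N (hprod a l) \<le> N (hprod b l)"
    using continuous_attains_inf[OF simplex_compact] simplex_ne by blast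
  have "N (hprod a l) \<le> Cstar N l"
    unfolding Cstar_def using a simplex_ne by (intro cINF_greatest) auto
  then show ?thesis using a hprod_cube l by (auto simp: targetS_def)
qed
lemma hS_upper:
  fixes N :: "real^'k \<Rightarrow> real" and s w :: "(real^'k)\<times>(real^'k)"
  assumes "s \<in> targetS N" shows "pinner s w \<le> hS N w"
proof -
  obtain B where B: "\<forall>x\<in>(cubeK::(real^'k) set). norm x \<le> B"
    using bounded_cbox cube_eq bounded_iff by metis
  have "pinner s w \<le> B * norm (fst w) + B * norm (snd w)" if "s \<in> targetS N" for s :: "(real^'k)\<times>(real^'k)"
  proof -
    have s: "fst s \<in> cubeK" "snd s \<in> cubeK" using that by (auto simp: targetS_def)
    have "inner (fst s) (fst w) \<le> norm (fst s) * norm (fst w)" by (rule norm_cauchy_schwarz)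
    also have "\<dots> \<le> B * norm (fst w)" using B s by (simp add: mult_right_mono)
    finally have 1: "inner (fst s) (fst w) \<le> B * norm (fst w)" .
    have "inner (snd s) (snd w) \<le> norm (snd s) * norm (snd w)" by (rule norm_cauchy_schwarz)
    also have "\<dots> \<le> B * norm (snd w)" using B s by (simp add: mult_right_mono)
    finally show ?thesis using 1 by (simp add: pinner_def)
  qed
  then have "bdd_above ((\<lambda>s. pinner s w) ` targetS N)" by (intro bdd_aboveI2) 
  then show ?thesis unfolding hS_def using assms by (rule cSUP_upper2) simp
qed
lemma g_eq:
  fixes a l w1 w2 :: "real^'k"
  assumes "a \<in> simplexK"
  shows "pinner (w1, w2) (hprod a l, l) = inner a (\<chi> i. w1$i*l$i + inner w2 l)"
proof -
  have s: "(\<Sum>i\<in>UNIV. a $ i) = 1" using assms by (simp add: simplexK_def)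
  have "inner a (\<chi> i. w1$i*l$i + inner w2 l) = (\<Sum>i\<in>UNIV. a$i * (w1$i*l$i)) + (\<Sum>i\<in>UNIV. a$i) * inner w2 l"
    by (simp add: inner_vec_def distrib_left sum.distrib sum_distrib_right)
  also have "\<dots> = pinner (w1, w2) (hprod a l, l)"
    using s by (simp add: pinner_def inner_vec_def hprod_def mult_ac)
  finally show ?thesis by simp
qed
lemma pin_bound:
  fixes w1 w2 :: "real^'k"
  shows "\<exists>C. \<forall>x\<in>cubeK. \<forall>y\<in>cubeK. pinner (w1, w2) (x, y) \<le> C"
proof -
  obtain B where B: "\<forall>x\<in>(cubeK::(real^'k) set). norm x \<le> B"
    using bounded_cbox cube_eq bounded_iff by metis
  have "pinner (w1, w2) (x, y) \<le> norm w1 * B + norm w2 * B" if s: "x \<in> cubeK" "y \<in> cubeK" for x y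
  proof -
    have "inner w1 x \<le> norm w1 * norm x" by (rule norm_cauchy_schwarz)
    also have "\<dots> \<le> norm w1 * B" using B s by (simp add: mult_left_mono)
    finally have 1: "inner w1 x \<le> norm w1 * B" .
    have "inner w2 y \<le> norm w2 * norm y" by (rule norm_cauchy_schwarz)
    also have "\<dots> \<le> norm w2 * B" using B s by (simp add: mult_left_mono)
    finally show ?thesis using 1 by (simp add: pinner_def)
  qed
  then show ?thesis by blast
qed

theorem lemma1:
  fixes N :: "real ^ 'k \<Rightarrow> real" and w1 w2 :: "real ^ 'k"
  assumes "is_norm N"
  shows "(INF a\<in>simplexK. SUP l\<in>cubeK. pinner (w1, w2) (hprod a l, l)) \<le> hS N (w1, w2)"
proof -
  define h where "h = hS N (w1,w2)"
  define u where "u = (\<lambda>l::real^'k. \<chi> i. w1$i*l$i + inner w2 l)"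
  have cube0: "(0::real^'k) \<in> cubeK" by (simp add: cubeK_def)
  have key: "\<exists>a\<in>simplexK. \<forall>l\<in>cubeK. pinner (w1,w2) (hprod a l, l) \<le> h + e" if e: "e > 0" for e
  proof -
    define T where "T = {q::real^'k. \<forall>i. h + e \<le> q$i}"
    define q0 where "q0 = (\<chi> j::'k. h + e)"
    have q0T: "q0 \<in> T" by (simp add: T_def q0_def)
    have cvxS: "convex (u ` cubeK)"
      unfolding convex_def
    proof (intro ballI allI impI)
      fix x y s t :: real
      fix x y assume "x \<in> u ` cubeK" "y \<in> u ` cubeK" and st: "0 \<le> s" "0 \<le> t" "s + t = 1"
      then obtain l1 l2 where l: "l1 \<in> cubeK" "l2 \<in> cubeK" "x = u l1" "y = u l2" by auto
      have "s *\<^sub>R l1 + t *\<^sub>R l2 \<in> cubeK"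
        using l st convex_box(1)[of "0::real^'k" 1] unfolding cube_eq convex_def by blast
      moreover have "s *\<^sub>R x + t *\<^sub>R y = u (s *\<^sub>R l1 + t *\<^sub>R l2)"
        using st(3) unfolding l u_def
        by (simp add: vec_eq_iff inner_add_right algebra_simps)
      ultimately show "s *\<^sub>R x + t *\<^sub>R y \<in> u ` cubeK" by blast
    qed
    have cmpS: "compact (u ` cubeK)"
      by (rule compact_continuous_image) (auto simp: u_def cube_eq intro!: continuous_intros)
    have neS: "u ` cubeK \<noteq> {}" using cube0 by blast
    have cvxT: "convex T" unfolding convex_def T_def
    proof (clarsimp)
      fix x y :: "real^'k" and s t :: real and i
      assume "\<forall>i. h + e \<le> x $ i" "\<forall>i. h + e \<le> y $ i" "0 \<le> s" "0 \<le> t" "s + t = 1"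
      then have "s * (h+e) + t * (h+e) \<le> s * x$i + t * y$i"
        by (intro add_mono mult_left_mono) auto
      then show "h + e \<le> s * x $ i + t * y $ i" using \<open>s+t=1\<close> by (metis distrib_right mult_1)
    qed
    have clT: "closed T" unfolding T_def
      by (simp add: Collect_all_eq closed_INT closed_Collect_le continuous_on_component)
    have disj: "u ` cubeK \<inter> T = {}"
    proof (rule ccontr)
      assume "u ` cubeK \<inter> T \<noteq> {}"
      then obtain l where l: "l \<in> cubeK" "u l \<in> T" by auto
      obtain a where a: "a \<in> simplexK" "(hprod a l, l) \<in> targetS N"
        using attain[OF assms l(1)] by blast
      have "pinner (hprod a l, l) (w1, w2) \<le> h"
        unfolding h_def by (rule hS_upper[OF a(2)])
      then have le: "inner a (u l) \<le> h"
        using g_eq[where ?w1.0=w1 and ?w2.0=w2 and l=l, OF a(1)] by (simp add: pinner_def inner_commute u_def)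
      have "(\<Sum>i\<in>UNIV. a$i * (h+e)) \<le> (\<Sum>i\<in>UNIV. a$i * (u l)$i)"
        using l(2) a(1) by (intro sum_mono mult_left_mono) (auto simp: T_def simplexK_def)
      moreover have "(\<Sum>i\<in>UNIV. a$i * (h+e)) = h + e"
        using a(1) by (simp add: simplexK_def sum_distrib_right[symmetric])
      ultimately have "h + e \<le> inner a (u l)" by (simp add: inner_vec_def)
      then show False using le e by simp
    qed
    obtain c b where cb: "\<forall>x\<in>u ` cubeK. inner c x < b" "\<forall>x\<in>T. inner c x > b"
      using separating_hyperplane_compact_closed[OF cvxS cmpS neS cvxT clT disj] by blast
    have cnn: "0 \<le> c$i" for i
    proof (rule ccontr)
      assume neg: "\<not> 0 \<le> c$i"
      define t where "t = (\<bar>inner c q0\<bar> + \<bar>b\<bar> + 1) / (- c$i)"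
      have t0: "0 \<le> t" using neg unfolding t_def by (intro divide_nonneg_nonneg) auto
      have "q0 + t *\<^sub>R axis i 1 \<in> T" using t0 by (simp add: T_def q0_def axis_def)
      then have "b < inner c (q0 + t *\<^sub>R axis i 1)" using cb(2) by blast
      also have "\<dots> = inner c q0 + t * c$i" by (simp add: inner_add_right inner_axis)
      also have "t * c$i = - (\<bar>inner c q0\<bar> + \<bar>b\<bar> + 1)" using neg by (simp add: t_def)
      finally show False by linarith
    qed
    define \<sigma> where "\<sigma> = (\<Sum>i\<in>UNIV. c$i)"
    have iq0: "inner c q0 = \<sigma> * (h + e)"
      by (simp add: inner_vec_def q0_def \<sigma>_def sum_distrib_right)
    have \<sigma>pos: "\<sigma> > 0"
    proof (rule ccontr)
      assume "\<not> \<sigma> > 0"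
      then have "\<sigma> = 0" using cnn sum_nonneg[of UNIV "\<lambda>i. c$i"] by (simp add: \<sigma>_def)
      then have "\<forall>i\<in>UNIV. c$i = 0" using cnn sum_nonneg_eq_0_iff[of UNIV "\<lambda>i. c$i"] by (simp add: \<sigma>_def)
      then have "c = 0" by (simp add: vec_eq_iff)
      then show False using cb(1) cube0 q0T cb(2) by fastforce
    qed
    define \<alpha> where "\<alpha> = (1 / \<sigma>) *\<^sub>R c"
    have \<alpha>S: "\<alpha> \<in> simplexK"
    proof -
      have "c$i \<le> \<sigma>" for i unfolding \<sigma>_def
        by (rule member_le_sum) (auto simp: cnn)
      moreover have "(\<Sum>i\<in>UNIV. c$i / \<sigma>) = 1"
        using \<sigma>pos by (simp add: sum_divide_distrib[symmetric] \<sigma>_def)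
      ultimately show ?thesis using \<sigma>pos cnn by (simp add: simplexK_def \<alpha>_def)
    qed
    have "pinner (w1,w2) (hprod \<alpha> l, l) \<le> h + e" if l: "l \<in> cubeK" for l
    proof -
      have "pinner (w1,w2) (hprod \<alpha> l, l) = inner c (u l) / \<sigma>"
        using g_eq[where ?w1.0=w1 and ?w2.0=w2 and l=l, OF \<alpha>S] by (simp add: \<alpha>_def u_def)
      also have "\<dots> < b / \<sigma>" using cb(1) l \<sigma>pos by (simp add: divide_strict_right_mono)
      also have "\<dots> < h + e" using cb(2)[rule_format, OF q0T] iq0 \<sigma>pos by (simp add: divide_less_eq mult.commute)
      finally show ?thesis by simp
    qed
    then show ?thesis using \<alpha>S by blast
  qed
  show ?thesis unfolding h_def[symmetric]
  proof (rule field_le_epsilon)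
    fix e :: real assume e: "e > 0"
    obtain a where a: "a \<in> simplexK" "\<forall>l\<in>cubeK. pinner (w1,w2) (hprod a l, l) \<le> h + e"
      using key[OF e] by blast
    obtain C where C: "\<forall>x\<in>cubeK. \<forall>y\<in>cubeK. pinner (w1, w2) (x, y) \<le> C"
      using pin_bound by blast
    have bda: "bdd_above ((\<lambda>l. pinner (w1,w2) (hprod a' l, l)) ` cubeK)" if "a' \<in> simplexK" for a'
      using C hprod_cube[OF that] by (intro bdd_aboveI2) blast
    have "bdd_below ((\<lambda>a. SUP l\<in>cubeK. pinner (w1, w2) (hprod a l, l)) ` simplexK)"
    proof (rule bdd_belowI2)
      fix a' :: "real^'k" assume a': "a' \<in> simplexK"
      have "pinner (w1, w2) (hprod a' 0, 0) = 0" by (simp add: pinner_def hprod_def inner_vec_def)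
      then show "0 \<le> (SUP l\<in>cubeK. pinner (w1, w2) (hprod a' l, l))"
        using cSUP_upper[OF cube0 bda[OF a']] by simp
    qed
    then have "(INF a\<in>simplexK. SUP l\<in>cubeK. pinner (w1, w2) (hprod a l, l))
          \<le> (SUP l\<in>cubeK. pinner (w1, w2) (hprod a l, l))"
      using a(1) by (rule cINF_lower)
    also have "\<dots> \<le> h + e" using a(2) cube0 by (intro cSUP_least) auto
    finally show "(INF a\<in>simplexK. SUP l\<in>cubeK. pinner (w1, w2) (hprod a l, l)) \<le> h + e" .
  qed
qed
end
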